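(* In the setting described in the context, suppose that Assumption A holds for $u$ and the sample pair $\{\boldsymbol v_i\}_{i=1}^N$, $\{z_i\}_{i=1}^N$. Then the function $$\tilde\varphi_N(w):=\frac1N\sum_{i=1}^N\max\{0,F_{\chi_K}(\tilde\rho_{\mathrm{out}}(w,\boldsymbol v_i,z_i))-F_{\chi_K}(\tilde\rho_{\mathrm{in}}(w,\boldsymbol v_i,z_i))\}$$ is differentiable at $w=u$, and $$\begin{aligned}\nabla\tilde\varphi_N(u)=\frac1N\sum_{i=1}^N\Bigg(&-\frac{f_{\chi_K}(\tilde\rho^{(i)}_{\mathrm{out}})}{\langle\nabla_z g_{j_{2,i}}(u,\tilde\xi_i+\tilde\rho^{(i)}_{\mathrm{out}}L_K\boldsymbol v_i),L_K\boldsymbol v_i\rangle}\nabla_u g_{j_{2,i}}(u,\tilde\xi_i+\tilde\rho^{(i)}_{\mathrm{out}}L_K\boldsymbol v_i)\\&+\mathbf 1_{\{\tilde\rho^{(i)}_{\mathrm{in}}>0\}}\frac{f_{\chi_K}(\tilde\rho^{(i)}_{\mathrm{in}})}{\langle\nabla_z g_{j_{1,i}}(u,\tilde\xi_i+\tilde\rho^{(i)}_{\mathrm{in}}L_K\boldsymbol v_i),L_K\boldsymbol v_i\rangle}\nabla_u g_{j_{1,i}}(u,\tilde\xi_i+\tilde\rho^{(i)}_{\mathrm{in}}L_K\boldsymbol v_i)\Bigg)H_i,\end{aligned}$$ where $H_i=1$ if $\tilde\rho^{(i)}_{\mathrm{out}}>\tilde\rho^{(i)}_{\mathrm{in}}$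 and $H_i=0$ otherwise, and any term whose distance $\tilde\rho^{(i)}_{\mathrm{out}}$ or $\tilde\rho^{(i)}_{\mathrm{in}}$ equals $+\infty$ (or whose index set is empty) is interpreted as $0$ (consistent with $f_{\chi_K}(+\infty)=0$).
   Context: Let $\mathscr H$ be a separable real Hilbert space with an orthonormal system $(\phi_k)_{k\ge1}$, $K\ge1$ an integer, and $L_K:\mathbb R^K\to\mathscr H$, $L_K\boldsymbol x=\sum_{k=1}^K x_k\phi_k$. Let $U$ be an open subset of a real Hilbert space (the parameter space), $\bar\xi\in\mathscr H$, and $g_1,\dots,g_M:U\times\mathscr H\to\mathbb R$ continuously differentiable functions such that for each $w\in U$ the map $g_j(w,\cdot)$ is affine; $\nabla_u g_j$ and $\nabla_z g_j$ denote gradients with respect to the first and second argument. Fix $u\in U$ with $g_j(u,\bar\xi)<0$ for all $j=1,\dots,M$. Let $\boldsymbol v_1,\dots,\boldsymbol v_N\in\mathbb S^{K-1}$, $z_1,\dots,z_N\in\mathscr H$, and $\tilde\xi_i:=\bar\xi+z_i$. For $w\in U$, $\boldsymbol v\in\mathbb S^{K-1}$, $z\in\mathscr H$ and each $j$, define (conventions $\inf\varnothing=+\infty$, $\sup\varnothing=0$ over subsets of $[0,\infty)$) $\rho_{j,\mathrm{in}}(w,\boldsymbol v,z):=\inf\{r\ge0:g_j(w,\bar\xi+z+rL_K\boldsymbol v)\le0\}$ and $\rho_{j,\mathrm{out}}(w,\boldsymbol v,z):=\sup\{r\ge0:g_j(w,\bar\xi+z+rL_K\boldsymbol v)\le0\}$.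 For the $i$-th sample let $J_{\mathrm i}:=\{j:g_j(u,\bar\xi+z_i)<0\}$, $J_{\mathrm o}:=\{j:g_j(u,\bar\xi+z_i)>0\}$, and $\tilde\rho_{\mathrm{in}}(w,\boldsymbol v_i,z_i):=\max_{j\in J_{\mathrm o}}\rho_{j,\mathrm{in}}(w,\boldsymbol v_i,z_i)$ ($=0$ if $J_{\mathrm o}=\varnothing$), $\tilde\rho_{\mathrm{out}}(w,\boldsymbol v_i,z_i):=\min_{j\in J_{\mathrm i}}\rho_{j,\mathrm{out}}(w,\boldsymbol v_i,z_i)$ ($=+\infty$ if $J_{\mathrm i}=\varnothing$). Write $\tilde\rho^{(i)}_{\mathrm{in}}:=\tilde\rho_{\mathrm{in}}(u,\boldsymbol v_i,z_i)$, $\tilde\rho^{(i)}_{\mathrm{out}}:=\tilde\rho_{\mathrm{out}}(u,\boldsymbol v_i,z_i)$. Assumption A: for all $i=1,\dots,N$: (1) $J_{\mathrm i}\cup J_{\mathrm o}=\{1,\dots,M\}$; (2) $\tilde\rho^{(i)}_{\mathrm{in}}\ne\tilde\rho^{(i)}_{\mathrm{out}}$ whenever at least one of them is finite; (3) if $0<\tilde\rho^{(i)}_{\mathrm{in}}<\infty$, there is exactly one $j\in J_{\mathrm o}$ with $\rho_{j,\mathrm{in}}(u,\boldsymbol v_i,z_i)=\tilde\rho^{(i)}_{\mathrm{in}}$, denoted $j_{1,i}$; and if $\tilde\rho^{(i)}_{\mathrm{out}}<\infty$, there is exactly one $j\in J_{\mathrm i}$ with $\rho_{j,\mathrm{out}}(u,\boldsymbol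 v_i,z_i)=\tilde\rho^{(i)}_{\mathrm{out}}$, denoted $j_{2,i}$. $F_{\chi_K}$ and $f_{\chi_K}$ denote the CDF and density of the Chi distribution with $K$ degrees of freedom, with $F_{\chi_K}(+\infty)=1$, $f_{\chi_K}(+\infty)=0$. *)

theory Defs
  imports "HOL-Analysis.Analysis" "HOL-Library.Extended_Real"
begin

definition chi_pdf :: "nat \<Rightarrow> real \<Rightarrow> real" where
  "chi_pdf K r = (if r < 0 then 0 else
     r ^ (K - 1) * exp (- (r\<^sup>2) / 2) / (2 powr (real K / 2 - 1) * Gamma (real K / 2)))"

definition chi_cdf :: "nat \<Rightarrow> real \<Rightarrow> real" where
  "chi_cdf K r = (if r \<le> 0 then 0 else integral {0..r} (chi_pdf K))"

definition chi_cdf_e :: "nat \<Rightarrow> ereal \<Rightarrow> real" where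
  "chi_cdf_e K r = (if r = \<infinity> then 1 else if r = - \<infinity> then 0 else chi_cdf K (real_of_ereal r))"

definition chi_pdf_e :: "nat \<Rightarrow> ereal \<Rightarrow> real" where
  "chi_pdf_e K r = (if r = \<infinity> \<or> r = - \<infinity> then 0 else chi_pdf K (real_of_ereal r))"

text \<open>Vectors of R^K are represented as functions nat => real; only coordinates 1..K matter.\<close>
definition LK :: "(nat \<Rightarrow> 'h::real_vector) \<Rightarrow> nat \<Rightarrow> (nat \<Rightarrow> real) \<Rightarrow> 'h" where
  "LK \<phi> K x = (\<Sum>k=1..K. x k *\<^sub>R \<phi> k)"

definition on_sphere :: "nat \<Rightarrow> (nat \<Rightarrow> real) \<Rightarrow> bool" where
  "on_sphere K v \<longleftrightarrow> (\<Sum>k=1..K. (v k)\<^sup>2) = 1"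

definition rho_in :: "('p \<Rightarrow> 'h \<Rightarrow> real) \<Rightarrow> 'h \<Rightarrow> (nat \<Rightarrow> 'h::real_vector) \<Rightarrow> nat
    \<Rightarrow> 'p \<Rightarrow> (nat \<Rightarrow> real) \<Rightarrow> 'h \<Rightarrow> ereal" where
  "rho_in gj \<xi> \<phi> K w v z = Inf {ereal r | r. r \<ge> 0 \<and> gj w (\<xi> + z + r *\<^sub>R LK \<phi> K v) \<le> 0}"

definition rho_out :: "('p \<Rightarrow> 'h \<Rightarrow> real) \<Rightarrow> 'h \<Rightarrow> (nat \<Rightarrow> 'h::real_vector) \<Rightarrow> nat
    \<Rightarrow> 'p \<Rightarrow> (nat \<Rightarrow> real) \<Rightarrow> 'h \<Rightarrow> ereal" where
  "rho_out gj \<xi> \<phi> K w v z =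
     (let S = {ereal r | r. r \<ge> 0 \<and> gj w (\<xi> + z + r *\<^sub>R LK \<phi> K v) \<le> 0}
      in if S = {} then 0 else Sup S)"

text \<open>Index sets (defined at the fixed reference parameter u).\<close>
definition J_in :: "(nat \<Rightarrow> 'p \<Rightarrow> 'h \<Rightarrow> real) \<Rightarrow> nat \<Rightarrow> 'p \<Rightarrow> 'h::real_vector \<Rightarrow> 'h \<Rightarrow> nat set" where
  "J_in g M u \<xi> z = {j \<in> {1..M}. g j u (\<xi> + z) < 0}"

definition J_out :: "(nat \<Rightarrow> 'p \<Rightarrow> 'h \<Rightarrow> real) \<Rightarrow> nat \<Rightarrow> 'p \<Rightarrow> 'h::real_vector \<Rightarrow> 'h \<Rightarrow> nat set" where
  "J_out g M u \<xi> z = {j \<in> {1..M}. g j u (\<xi> + z) > 0}"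

definition rho_in_t :: "(nat \<Rightarrow> 'p \<Rightarrow> 'h \<Rightarrow> real) \<Rightarrow> nat \<Rightarrow> 'p \<Rightarrow> 'h \<Rightarrow> (nat \<Rightarrow> 'h::real_vector)
    \<Rightarrow> nat \<Rightarrow> 'p \<Rightarrow> (nat \<Rightarrow> real) \<Rightarrow> 'h \<Rightarrow> ereal" where
  "rho_in_t g M u \<xi> \<phi> K w v z =
     (if J_out g M u \<xi> z = {} then 0
      else Max ((\<lambda>j. rho_in (g j) \<xi> \<phi> K w v z) ` J_out g M u \<xi> z))"

definition rho_out_t :: "(nat \<Rightarrow> 'p \<Rightarrow> 'h \<Rightarrow> real) \<Rightarrow> nat \<Rightarrow> 'p \<Rightarrow> 'h \<Rightarrow> (nat \<Rightarrow> 'h::real_vector)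
    \<Rightarrow> nat \<Rightarrow> 'p \<Rightarrow> (nat \<Rightarrow> real) \<Rightarrow> 'h \<Rightarrow> ereal" where
  "rho_out_t g M u \<xi> \<phi> K w v z =
     (if J_in g M u \<xi> z = {} then \<infinity>
      else Min ((\<lambda>j. rho_out (g j) \<xi> \<phi> K w v z) ` J_in g M u \<xi> z))"

end

theory Submission
  imports Defs
begin

lemma chi_pdf_nonneg: "chi_pdf K r \<ge> 0"
proof (cases "K = 0")
  case True then show ?thesis by (simp add: chi_pdf_def)
next
  case False then show ?thesis unfolding chi_pdf_def by (auto intro!: divide_nonneg_pos mult_pos_pos)
qed

lemma chi_pdf_cont: assumes "K \<ge> 1" shows "continuous_on {0..} (chi_pdf K)"
proof -
  have "real K / 2 \<notin> \<int>\<^sub>\<le>\<^sub>0" using assms by (auto dest: nonpos_Ints_nonpos)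
  then have "continuous_on {0..} (\<lambda>r. r ^ (K - 1) * exp (- (r\<^sup>2) / 2) / (2 powr (real K / 2 - 1) * Gamma (real K / 2)))"
    by (intro continuous_intros) (auto simp: Gamma_eq_zero_iff)
  then show ?thesis by (rule continuous_on_eq) (auto simp: chi_pdf_def)
qed

lemma chi_pdf_cont_sub: "K \<ge> 1 \<Longrightarrow> A \<subseteq> {0..} \<Longrightarrow> continuous_on A (chi_pdf K)"
  using continuous_on_subset chi_pdf_cont by blast

lemma chi_cdf_nonneg: "K \<ge> 1 \<Longrightarrow> chi_cdf K r \<ge> 0"
  unfolding chi_cdf_def
  by (auto intro!: integral_nonneg integrable_continuous_interval chi_pdf_nonneg chi_pdf_cont_sub)

lemma chi_cdf_mono: assumes "r1 \<le> r2" "K \<ge> 1" shows "chi_cdf K r1 \<le> chi_cdf K r2"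
proof (cases "r1 \<le> 0")
  case True then show ?thesis using chi_cdf_nonneg[of K r2] assms by (simp add: chi_cdf_def)
next
  case False
  have int: "chi_pdf K integrable_on {a..b}" if "0 \<le> a" for a b
    using that assms by (auto intro!: integrable_continuous_interval chi_pdf_cont_sub)
  have "integral {0..r2} (chi_pdf K) = integral {0..r1} (chi_pdf K) + integral {r1..r2} (chi_pdf K)"
    using Henstock_Kurzweil_Integration.integral_combine[of 0 r1 r2 "chi_pdf K"] int[of 0 r2] False assms by auto
  moreover have "integral {r1..r2} (chi_pdf K) \<ge> 0"
    using False by (intro integral_nonneg int chi_pdf_nonneg) auto
  ultimately show ?thesis using False assms by (simp add: chi_cdf_def)
qed

lemma chi_cdf_deriv: assumes "r > 0" "K \<ge> 1" shows "(chi_cdf K has_real_derivative chi_pdf K r) (at r)"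
proof -
  have "((\<lambda>x. integral {0..x} (chi_pdf K)) has_real_derivative chi_pdf K r) (at r within {0..r+1})"
    using assms by (intro integral_has_real_derivative chi_pdf_cont_sub) auto
  then have "((\<lambda>x. integral {0..x} (chi_pdf K)) has_real_derivative chi_pdf K r) (at r)"
    using assms by (subst (asm) at_within_interior) (auto simp: interior_atLeastAtMost_real)
  then show ?thesis
    apply (rule has_field_derivative_transform_within_open[where S="{0<..}"])
    using assms by (auto simp: chi_cdf_def)
qed

lemma chi_subst_point:
  assumes "x > 0" "K \<ge> 1"
  shows "((x\<^sup>2/2) powr (real K/2 - 1) / exp (x\<^sup>2/2)) * x = Gamma (real K/2) * chi_pdf K x"
proof -
  have G: "Gamma (real K/2) > 0" using assms by auto
  have a: "(x\<^sup>2/2) powr (real K/2 - 1) = (x\<^sup>2) powr (real K/2 - 1) / 2 powr (real K/2 - 1)"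
    using assms by (simp add: powr_divide)
  have b: "(x\<^sup>2) powr (real K/2 - 1) = x powr (real K - 2)"
  proof -
    have "(x\<^sup>2) = x powr 2" using assms by (simp add: powr_realpow)
    then have "(x\<^sup>2) powr (real K/2 - 1) = x powr (2 * (real K/2 - 1))" by (simp add: powr_powr)
    then show ?thesis by (simp add: algebra_simps)
  qed
  have c: "x powr (real K - 2) * x = x powr (real K - 1)"
  proof -
    have "x powr (real K - 2) * x = x * x powr (real K - 2)" by simp
    also have "\<dots> = x powr (1 + (real K - 2))" using assms by (intro powr_mult_base) simp
    finally show ?thesis by (simp add: algebra_simps)
  qed
  have d: "x powr (real K - 1) = x ^ (K - 1)"
    using assms by (simp add: powr_realpow[symmetric] of_nat_diff)
  have e: "((x\<^sup>2/2) powr (real K/2 - 1) / exp (x\<^sup>2/2)) * x = x ^ (K - 1) / 2 powr (real K/2 - 1) / exp (x\<^sup>2/2)"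
    unfolding a b c[symmetric] d[symmetric] by simp
  show ?thesis
    unfolding e chi_pdf_def using G assms by (simp add: exp_minus divide_simps less_imp_neq[OF G, symmetric])
qed

lemma chi_pdf_meas[measurable]: "chi_pdf K \<in> borel_measurable borel"
  unfolding chi_pdf_def by measurable

lemma chi_tail:
  assumes K: "K \<ge> 1" and R: "R > 0"
  shows "chi_cdf K R \<le> 1 \<and> 1 - chi_cdf K R \<le> real K / R\<^sup>2"
proof -
  define s where "s = real K / 2"
  have s: "s > 0" using K by (simp add: s_def)
  define ff where "ff t = t powr (s - 1) / exp t" for t :: real
  have ff_nn: "ff t \<ge> 0" for t by (simp add: ff_def)
  define T where "T = R\<^sup>2 / 2"
  have T: "T > 0" using R by (simp add: T_def)
  have [measurable]: "ff \<in> borel_measurable borel" unfolding ff_def by measurable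
  define A where "A = (\<integral>\<^sup>+ t. ennreal (ff t) * indicator {0..T} t \<partial>lborel)"
  define B where "B = (\<integral>\<^sup>+ t. ennreal (ff t) * indicator {T<..} t \<partial>lborel)"
  have GAB: "ennreal (Gamma s) = A + B"
  proof -
    have "ennreal (Gamma s) = (\<integral>\<^sup>+ t. ennreal (indicator {0..} t * t powr (s - 1) / exp t) \<partial>lborel)"
      using Gamma_conv_nn_integral_real[OF s] by simp
    also have "\<dots> = (\<integral>\<^sup>+ t. ennreal (ff t) * indicator {0..T} t + ennreal (ff t) * indicator {T<..} t \<partial>lborel)"
      using T by (intro nn_integral_cong) (auto simp: ff_def indicator_def)
    also have "\<dots> = A + B" unfolding A_def B_def by (rule nn_integral_add) auto
    finally show ?thesis .
  qed
  define F where "F = chi_cdf K R"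
  have FI: "F = integral {0..R} (chi_pdf K)" using R by (simp add: F_def chi_cdf_def)
  have Fnn: "F \<ge> 0" using chi_cdf_nonneg[OF K] by (simp add: F_def)
  have A: "A = ennreal (Gamma s * F)"
  proof -
    have "A = (\<integral>\<^sup>+ x. ennreal (ff x * indicator {(\<lambda>x. x\<^sup>2/2) 0..(\<lambda>x. x\<^sup>2/2) R} x) \<partial>lborel)"
      unfolding A_def T_def by (intro nn_integral_cong) (auto simp: indicator_def)
    also have "\<dots> = (\<integral>\<^sup>+ x. ennreal (ff ((\<lambda>x. x\<^sup>2/2) x) * (\<lambda>x. x) x * indicator {0..R} x) \<partial>lborel)"
      apply (rule nn_integral_substitution)
      subgoal unfolding set_borel_measurable_def by measurable
      by (auto intro!: derivative_eq_intros continuous_intros simp: R less_imp_le)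
    also have "\<dots> = (\<integral>\<^sup>+ x. ennreal (Gamma s) * (ennreal (chi_pdf K x) * indicator {0..R} x) \<partial>lborel)"
    proof (rule nn_integral_cong_AE)
      show "AE x in lborel. ennreal (ff ((\<lambda>x. x\<^sup>2/2) x) * (\<lambda>x. x) x * indicator {0..R} x) =
          ennreal (Gamma s) * (ennreal (chi_pdf K x) * indicator {0..R} x)"
        using AE_lborel_singleton[of 0]
      proof eventually_elim
        case (elim x)
        show ?case
        proof (cases "x \<in> {0..R}")
          case True
          then have "x > 0" using elim by auto
          then show ?thesis using chi_subst_point[OF _ K, of x] True
            using s by (simp add: ff_def s_def[symmetric] ennreal_mult chi_pdf_nonneg)
        qed simp
      qed
    qed
    also have "\<dots> = ennreal (Gamma s) * (\<integral>\<^sup>+ x. ennreal (chi_pdf K x) * indicator {0..R} x \<partial>lborel)"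
      by (rule nn_integral_cmult) measurable
    also have "(\<integral>\<^sup>+ x. ennreal (chi_pdf K x) * indicator {0..R} x \<partial>lborel) = ennreal F"
      unfolding FI
      by (rule nn_integral_has_integral_lebesgue') (auto intro!: chi_pdf_nonneg integrable_integral
          integrable_continuous_interval chi_pdf_cont_sub K)
    finally show ?thesis using s Fnn by (simp add: ennreal_mult)
  qed
  have Bb: "B \<le> ennreal (s * Gamma s / T)"
  proof -
    have "B \<le> (\<integral>\<^sup>+ t. ennreal (1 / T) * ennreal (indicator {0..} t * t powr ((s + 1) - 1) / exp t) \<partial>lborel)"
      unfolding B_def
    proof (intro nn_integral_mono)
      fix t
      show "ennreal (ff t) * indicator {T<..} t \<le> ennreal (1 / T) * ennreal (indicator {0..} t * t powr (s + 1 - 1) / exp t)"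
      proof (cases "t > T")
        case True
        then have t: "t > 0" using T by auto
        have "t powr (s - 1) = t powr s / t" using t by (simp add: powr_diff)
        also have "\<dots> \<le> t powr s / T" using t True T by (intro divide_left_mono) auto
        finally have "t powr (s - 1) / exp t \<le> (t powr s / T) / exp t"
          by (rule divide_right_mono) simp
        then have "ff t \<le> (1 / T) * (t powr s / exp t)" unfolding ff_def
          by simp
        then show ?thesis using True t T
          by (simp add: ennreal_mult'[symmetric] ennreal_leI)
      qed simp
    qed
    also have "\<dots> = ennreal (1 / T) * ennreal (Gamma (s + 1))"
      using s by (subst nn_integral_cmult) (auto simp: Gamma_conv_nn_integral_real)
    also have "\<dots> = ennreal (s * Gamma s / T)"
    proof -
      have "s \<notin> \<int>\<^sub>\<le>\<^sub>0" using s by (auto dest: nonpos_Ints_nonpos)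
      then show ?thesis using T s by (simp add: ennreal_mult'[symmetric] Gamma_plus1)
    qed
    finally show ?thesis .
  qed
  have Gp: "Gamma s > 0" using s by simp
  have Bfin: "B < \<infinity>" using Bb ennreal_less_top le_less_trans infinity_ennreal_def by metis
  obtain b where b: "B = ennreal b" "b \<ge> 0" using Bfin by (cases B) auto
  have "Gamma s = Gamma s * F + b" using GAB A b Gp Fnn
    by (simp add: ennreal_plus[symmetric] mult_nonneg_nonneg del: ennreal_plus)
  moreover have "b \<le> s * Gamma s / T" using Bb b Gp s T by (simp add: ennreal_le_iff)
  ultimately have "Gamma s * (1 - F) \<le> Gamma s * (s / T)" "Gamma s * (1 - F) \<ge> 0"
    using b by (auto simp: algebra_simps)
  then have "1 - F \<le> s / T" "1 - F \<ge> 0" using Gp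
    by (simp_all only: mult_le_cancel_left_pos zero_le_mult_iff) auto
  then show ?thesis unfolding F_def s_def T_def by (auto simp: field_simps)
qed

definition rr :: "real \<Rightarrow> real \<Rightarrow> ereal" where
  "rr a b = (if b > 0 then ereal (- a / b) else \<infinity>)"

lemma chi_cdf_le1: "K \<ge> 1 \<Longrightarrow> chi_cdf K r \<le> 1"
  using chi_tail[of K r] by (cases "r > 0") (auto simp: chi_cdf_def)

lemma Fe_bounds: "K \<ge> 1 \<Longrightarrow> 0 \<le> chi_cdf_e K x \<and> chi_cdf_e K x \<le> 1"
  by (auto simp: chi_cdf_e_def chi_cdf_nonneg chi_cdf_le1)

lemma Fe_mono: assumes "K \<ge> 1" "x \<le> y" shows "chi_cdf_e K x \<le> chi_cdf_e K y"
  using assms Fe_bounds[OF assms(1), of x] Fe_bounds[OF assms(1), of y]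
  by (cases x; cases y) (auto simp: chi_cdf_e_def chi_cdf_mono chi_cdf_nonneg chi_cdf_le1)

lemma deriv_zero_squeeze:
  fixes psi t :: "'a::real_normed_vector \<Rightarrow> real"
  assumes "(t has_derivative (\<lambda>h. 0)) (at u)" "t u = 0" "psi u = 0"
    "eventually (\<lambda>w. \<bar>psi w\<bar> \<le> t w) (at u)"
  shows "(psi has_derivative (\<lambda>h. 0)) (at u)"
proof -
  from assms(1,2) have lim: "((\<lambda>y. \<bar>t y\<bar> / norm (y - u)) \<longlongrightarrow> 0) (at u)"
    by (simp add: has_derivative_iff_norm)
  show ?thesis unfolding has_derivative_iff_norm
  proof (intro conjI bounded_linear_zero)
    show "((\<lambda>y. norm (psi y - psi u - 0) / norm (y - u)) \<longlongrightarrow> 0) (at u)"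
    proof (rule Lim_null_comparison[OF _ lim])
      show "\<forall>\<^sub>F x in at u. norm (norm (psi x - psi u - 0) / norm (x - u)) \<le> \<bar>t x\<bar> / norm (x - u)"
        using assms(4) by eventually_elim (use assms(3) in \<open>auto intro!: divide_right_mono\<close>)
    qed
  qed
qed

lemma tail_rr:
  fixes a b :: "'a::real_inner \<Rightarrow> real"
  assumes a: "(a \<longlongrightarrow> a u) (at u)" "a u < 0" and b: "b u \<le> 0" "(b has_derivative (\<lambda>h. b' \<bullet> h)) (at u)"
    and K: "K \<ge> 1"
  shows "((\<lambda>w. 1 - chi_cdf_e K (rr (a w) (b w))) has_derivative (\<lambda>h. 0)) (at u)"
proof -
  define L where "L = norm b' + 1"
  define c where "c = - a u / 2"
  have L: "L > 0" and c: "c > 0" using a by (auto simp: L_def c_def intro: add_nonneg_pos)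
  define C where "C = real K * (L / c)\<^sup>2"
  define t where "t w = C * (norm (w - u))\<^sup>2" for w
  have td: "(t has_derivative (\<lambda>h. 0)) (at u)"
  proof -
    have "(t has_derivative (\<lambda>h. C * (h \<bullet> (u - u) + (u - u) \<bullet> h))) (at u)"
      unfolding t_def power2_norm_eq_inner by (auto intro!: derivative_eq_intros)
    then show ?thesis by simp
  qed
  have ev1: "eventually (\<lambda>w. a w < - c) (at u)"
    using order_tendstoD(2)[OF a(1), of "-c"] a(2) by (simp add: c_def)
  have ev2: "eventually (\<lambda>w. norm (b w - b u - b' \<bullet> (w - u)) \<le> 1 * norm (w - u)) (at u)"
  proof -
    obtain d where d: "d > 0" "\<And>y. norm (y - u) < d \<Longrightarrow> norm (b y - b u - b' \<bullet> (y - u)) \<le> 1 * norm (y - u)"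
      using b(2) unfolding has_derivative_at_alt by (meson zero_less_one)
    show ?thesis unfolding eventually_at using d by (auto simp: dist_norm)
  qed
  show ?thesis
  proof (rule deriv_zero_squeeze[OF td])
    show "t u = 0" by (simp add: t_def)
    show "1 - chi_cdf_e K (rr (a u) (b u)) = 0" using b by (simp add: rr_def chi_cdf_e_def)
    show "\<forall>\<^sub>F w in at u. \<bar>1 - chi_cdf_e K (rr (a w) (b w))\<bar> \<le> t w"
      using ev1 ev2
    proof eventually_elim
      case (elim w)
      have tnn: "t w \<ge> 0" using L c by (simp add: t_def C_def)
      show ?case
      proof (cases "b w > 0")
        case False then show ?thesis using tnn by (simp add: rr_def chi_cdf_e_def)
      next
        case True
        define d where "d = norm (w - u)"
        have "b w \<le> b w - b u" using b by simp
        also have "\<dots> \<le> \<bar>b' \<bullet> (w - u)\<bar> + d" using elim(2) by (simp add: d_def)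
        also have "\<bar>b' \<bullet> (w - u)\<bar> \<le> norm b' * d" unfolding d_def by (rule Cauchy_Schwarz_ineq2)
        finally have bw: "b w \<le> L * d" by (simp add: L_def algebra_simps)
        define R where "R = - a w / b w"
        have Rpos: "R > 0" using True elim(1) c by (simp add: R_def divide_neg_pos)
        have "c / (L * d) \<le> c / b w" using True bw c by (intro divide_left_mono) auto
        also have "\<dots> \<le> R" unfolding R_def using True elim(1) by (intro divide_right_mono) auto
        finally have cR: "c / (L * d) \<le> R" .
        have "d > 0" using bw True L by (metis less_le_trans mult_zero_right not_le norm_ge_zero d_def
            linorder_neqE_linordered_idom)
        have "1 - chi_cdf K R \<le> real K / R\<^sup>2" using chi_tail[OF K Rpos] by simp
        also have "\<dots> \<le> real K / (c / (L * d))\<^sup>2"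
        proof -
          have p: "c / (L * d) > 0" using c L \<open>d > 0\<close> by simp
          have "(c / (L * d))\<^sup>2 \<le> R\<^sup>2" using cR p by (intro power_mono) auto
          moreover have "0 < R\<^sup>2 * (c / (L * d))\<^sup>2" using p Rpos by (intro mult_pos_pos zero_less_power)
          ultimately show ?thesis by (intro divide_left_mono) auto
        qed
        also have "\<dots> = t w" using c L \<open>d > 0\<close> by (simp add: t_def C_def d_def field_simps)
        finally show ?thesis using True chi_tail[OF K Rpos] by (simp add: rr_def chi_cdf_e_def R_def)
      qed
    qed
  qed
qed

lemma cdf_ratio_deriv:
  fixes a b :: "'a::real_inner \<Rightarrow> real"
  assumes a: "(a has_derivative (\<lambda>h. a' \<bullet> h)) (at u)" "a u < 0"
    and b: "(b has_derivative (\<lambda>h. b' \<bullet> h)) (at u)" "b u > 0" and K: "K \<ge> 1"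
  shows "((\<lambda>w. chi_cdf K (- a w / b w)) has_derivative
     (\<lambda>h. ((- chi_pdf K (- a u / b u) / b u) *\<^sub>R (a' + (- a u / b u) *\<^sub>R b')) \<bullet> h)) (at u)"
proof -
  define r where "r = - a u / b u"
  have r: "r > 0" using a b by (simp add: r_def divide_neg_pos)
  have q: "((\<lambda>w. - a w / b w) has_derivative
      (\<lambda>h. - (- a u * (inverse (b u) * (b' \<bullet> h) * inverse (b u)) + (a' \<bullet> h) / b u))) (at u)"
    using has_derivative_divide[OF has_derivative_minus[OF a(1)] b(1)] b(2) by simp
  have c: "(chi_cdf K has_derivative (*) (chi_pdf K r)) (at (- a u / b u))"
    using chi_cdf_deriv[OF r K] unfolding r_def has_field_derivative_def .
  have "((\<lambda>w. chi_cdf K (- a w / b w)) has_derivative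
      (\<lambda>h. chi_pdf K r * (- (- a u * (inverse (b u) * (b' \<bullet> h) * inverse (b u)) + (a' \<bullet> h) / b u)))) (at u)"
    by (rule has_derivative_compose[OF q c])
  then show ?thesis
    apply (rule has_derivative_eq_rhs)
    using b(2) by (intro ext) (simp add: r_def inner_add_left inner_diff_left field_simps)
qed

lemma rr_tendsto:
  assumes a: "(a \<longlongrightarrow> a0) F" "a0 < 0" and b: "(b \<longlongrightarrow> b0) F"
  shows "((\<lambda>w. rr (a w) (b w)) \<longlongrightarrow> rr a0 b0) F"
proof (cases "b0 > 0")
  case True
  have lim: "((\<lambda>w. ereal (- a w / b w)) \<longlongrightarrow> ereal (- a0 / b0)) F"
    using True by (intro tendsto_intros a b) auto
  have ev: "eventually (\<lambda>w. ereal (- a w / b w) = rr (a w) (b w)) F"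
    using order_tendstoD(1)[OF b True] by eventually_elim (simp add: rr_def)
  have "((\<lambda>w. rr (a w) (b w)) \<longlongrightarrow> ereal (- a0 / b0)) F" by (rule Lim_transform_eventually[OF lim ev])
  then show ?thesis using True by (simp add: rr_def)
next
  case False
  show ?thesis
  proof (cases "b0 < 0")
    case True
    have "eventually (\<lambda>w. rr (a w) (b w) = \<infinity>) F"
      using order_tendstoD(2)[OF b True] by eventually_elim (simp add: rr_def)
    then show ?thesis using True by (simp add: rr_def tendsto_eventually)
  next
    case False2: False
    with False have b0: "b0 = 0" by simp
    have "((\<lambda>w. rr (a w) (b w)) \<longlongrightarrow> \<infinity>) F"
      unfolding tendsto_PInfty
    proof
      fix r :: real
      define m where "m = max r 1"
      have m: "m > 0" "r \<le> m" by (auto simp: m_def)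
      define c where "c = - a0 / 2"
      have c: "c > 0" using a by (simp add: c_def)
      have e1: "eventually (\<lambda>w. a w < - c) F" using order_tendstoD(2)[OF a(1), of "-c"] a(2) by (simp add: c_def)
      have e2: "eventually (\<lambda>w. b w < c / m) F" using order_tendstoD(2)[OF b, of "c/m"] b0 c m by simp
      show "eventually (\<lambda>w. ereal r < rr (a w) (b w)) F"
        using e1 e2
      proof eventually_elim
        case (elim w)
        show ?case
        proof (cases "b w > 0")
          case True
          have "m < c / b w" using elim(2) True m c by (simp add: field_simps)
          also have "c / b w < - a w / b w" using True elim(1) by (intro divide_strict_right_mono) auto
          finally show ?thesis using m True by (simp add: rr_def)
        qed (simp add: rr_def)
      qed
    qed
    then show ?thesis using b0 by (simp add: rr_def)
  qed
qed

lemma ev_all_gt: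
  fixes f :: "nat \<Rightarrow> 'x \<Rightarrow> 'b::linorder_topology"
  assumes "finite J" "\<And>j. j \<in> J \<Longrightarrow> (f j \<longlongrightarrow> f j u) F" "\<And>j. j \<in> J \<Longrightarrow> c < f j u"
  shows "eventually (\<lambda>w. \<forall>j\<in>J. c < f j w) F"
  using assms by (intro eventually_ball_finite) (auto intro: order_tendstoD)

lemma ev_all_lt:
  fixes f :: "nat \<Rightarrow> 'x \<Rightarrow> 'b::linorder_topology"
  assumes "finite J" "\<And>j. j \<in> J \<Longrightarrow> (f j \<longlongrightarrow> f j u) F" "\<And>j. j \<in> J \<Longrightarrow> f j u < c"
  shows "eventually (\<lambda>w. \<forall>j\<in>J. f j w < c) F"
  using assms by (intro eventually_ball_finite) (auto intro: order_tendstoD)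

lemma ev_Min_eq:
  fixes f :: "nat \<Rightarrow> 'x \<Rightarrow> ereal"
  assumes "finite J" "j0 \<in> J" "\<And>j. j \<in> J \<Longrightarrow> (f j \<longlongrightarrow> f j u) F"
    "\<And>j. j \<in> J \<Longrightarrow> j \<noteq> j0 \<Longrightarrow> f j0 u < f j u"
  shows "eventually (\<lambda>w. Min ((\<lambda>j. f j w) ` J) = f j0 w) F"
proof -
  have "eventually (\<lambda>w. \<forall>j\<in>J - {j0}. f j0 w < f j w) F"
  proof (intro eventually_ball_finite ballI)
    show "finite (J - {j0})" using assms by auto
    fix j assume j: "j \<in> J - {j0}"
    obtain c where c: "f j0 u < ereal c" "ereal c < f j u" using ereal_dense2 assms(4) j by blast
    have "eventually (\<lambda>w. f j0 w < ereal c) F" using assms(2,3) c(1) by (intro order_tendstoD) auto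
    moreover have "eventually (\<lambda>w. ereal c < f j w) F" using assms(3) j c(2) by (intro order_tendstoD) auto
    ultimately show "eventually (\<lambda>w. f j0 w < f j w) F" by eventually_elim auto
  qed
  then show ?thesis
  proof eventually_elim
    case (elim w)
    show ?case using elim assms(1,2) by (intro Min_eqI) (auto intro: less_imp_le)
  qed
qed

lemma ev_Max_eq:
  fixes f :: "nat \<Rightarrow> 'x \<Rightarrow> ereal"
  assumes "finite J" "j0 \<in> J" "\<And>j. j \<in> J \<Longrightarrow> (f j \<longlongrightarrow> f j u) F"
    "\<And>j. j \<in> J \<Longrightarrow> j \<noteq> j0 \<Longrightarrow> f j u < f j0 u"
  shows "eventually (\<lambda>w. Max ((\<lambda>j. f j w) ` J) = f j0 w) F"
proof -
  have "eventually (\<lambda>w. \<forall>j\<in>J - {j0}. f j w < f j0 w) F"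
  proof (intro eventually_ball_finite ballI)
    show "finite (J - {j0})" using assms by auto
    fix j assume j: "j \<in> J - {j0}"
    obtain c where c: "f j u < ereal c" "ereal c < f j0 u" using ereal_dense2 assms(4) j by blast
    have "eventually (\<lambda>w. ereal c < f j0 w) F" using assms(2,3) c(2) by (intro order_tendstoD) auto
    moreover have "eventually (\<lambda>w. f j w < ereal c) F" using assms(3) j c(1) by (intro order_tendstoD) auto
    ultimately show "eventually (\<lambda>w. f j w < f j0 w) F" by eventually_elim auto
  qed
  then show ?thesis
  proof eventually_elim
    case (elim w)
    show ?case using elim assms(1,2) by (intro Max_eqI) (auto intro: less_imp_le)
  qed
qed

lemma hasderiv_tendsto: "(f has_derivative f') (at u) \<Longrightarrow> (f \<longlongrightarrow> f u) (at u)"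
  using has_derivative_continuous isCont_def by blast

lemma Fe_ereal: "chi_cdf_e K (ereal x) = chi_cdf K x"
  by (simp add: chi_cdf_e_def)

lemma rr_pos: "a < 0 \<Longrightarrow> rr a b > 0"
  by (auto simp: rr_def divide_neg_pos)

lemma HOUT:
  fixes a b :: "nat \<Rightarrow> 'a::real_inner \<Rightarrow> real" and a' b' :: "nat \<Rightarrow> 'a" and Ji :: "nat set" and u :: 'a and K :: nat
  defines "OUT \<equiv> \<lambda>w. if Ji = {} then \<infinity> else Min ((\<lambda>j. rr (a j w) (b j w)) ` Ji)"
  defines "j2 \<equiv> THE j. j \<in> Ji \<and> rr (a j u) (b j u) = OUT u"
  assumes fin: "finite Ji" and K: "K \<ge> 1"
    and ad: "\<And>j. j \<in> Ji \<Longrightarrow> (a j has_derivative (\<lambda>h. a' j \<bullet> h)) (at u)"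
    and bd: "\<And>j. j \<in> Ji \<Longrightarrow> (b j has_derivative (\<lambda>h. b' j \<bullet> h)) (at u)"
    and si: "\<And>j. j \<in> Ji \<Longrightarrow> a j u < 0"
    and A3: "OUT u < \<infinity> \<Longrightarrow> \<exists>!j. j \<in> Ji \<and> rr (a j u) (b j u) = OUT u"
  shows "((\<lambda>w. chi_cdf_e K (OUT w)) has_derivative (\<lambda>h. (if OUT u = \<infinity> then 0 else
     (- chi_pdf_e K (OUT u) / b j2 u) *\<^sub>R (a' j2 + real_of_ereal (OUT u) *\<^sub>R b' j2)) \<bullet> h)) (at u)"
proof -
  have tl: "(rr (a j w) (b j w)) \<in> (\<lambda>j. rr (a j w) (b j w)) ` Ji" if "j \<in> Ji" for j w using that by auto
  have cont: "((\<lambda>w. rr (a j w) (b j w)) \<longlongrightarrow> rr (a j u) (b j u)) (at u)" if "j \<in> Ji" for j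
    using that by (intro rr_tendsto hasderiv_tendsto[OF ad] hasderiv_tendsto[OF bd] si)
  show ?thesis
  proof (cases "OUT u = \<infinity>")
    case True
    have inf: "rr (a j u) (b j u) = \<infinity>" if "j \<in> Ji" for j
      using True that fin unfolding OUT_def by (auto split: if_splits simp: Min_eq_iff)
    define t where "t w = (\<Sum>j\<in>Ji. 1 - chi_cdf_e K (rr (a j w) (b j w)))" for w
    have td: "(t has_derivative (\<lambda>h. 0)) (at u)"
    proof -
      have "(t has_derivative (\<lambda>h. \<Sum>j\<in>Ji. 0)) (at u)"
        unfolding t_def
      proof (rule has_derivative_sum)
        fix j assume j: "j \<in> Ji"
        have "b j u \<le> 0" using inf[OF j] by (auto simp: rr_def split: if_splits)
        then show "((\<lambda>w. 1 - chi_cdf_e K (rr (a j w) (b j w))) has_derivative (\<lambda>h. 0)) (at u)"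
          by (rule tail_rr[OF hasderiv_tendsto[OF ad[OF j]] si[OF j] _ bd[OF j] K])
      qed
      then show ?thesis by simp
    qed
    have "((\<lambda>w. 1 - chi_cdf_e K (OUT w)) has_derivative (\<lambda>h. 0)) (at u)"
    proof (rule deriv_zero_squeeze[OF td])
      show "t u = 0" using inf by (simp add: t_def chi_cdf_e_def)
      show "1 - chi_cdf_e K (OUT u) = 0" using True by (simp add: chi_cdf_e_def)
      show "\<forall>\<^sub>F w in at u. \<bar>1 - chi_cdf_e K (OUT w)\<bar> \<le> t w"
      proof (intro always_eventually allI)
        fix w
        have nn: "0 \<le> 1 - chi_cdf_e K (rr (a j w) (b j w))" for j using Fe_bounds[OF K] by simp
        show "\<bar>1 - chi_cdf_e K (OUT w)\<bar> \<le> t w"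
        proof (cases "Ji = {}")
          case True then show ?thesis by (simp add: OUT_def t_def chi_cdf_e_def)
        next
          case False
          obtain j where j: "j \<in> Ji" "OUT w = rr (a j w) (b j w)"
          proof -
            have "Min ((\<lambda>j. rr (a j w) (b j w)) ` Ji) \<in> (\<lambda>j. rr (a j w) (b j w)) ` Ji"
              using fin False by (intro Min_in) auto
            then show ?thesis using that False unfolding OUT_def by auto
          qed
          have "\<bar>1 - chi_cdf_e K (OUT w)\<bar> = 1 - chi_cdf_e K (rr (a j w) (b j w))"
            using j Fe_bounds[OF K] by simp
          also have "\<dots> \<le> t w" unfolding t_def using j fin nn by (intro member_le_sum) auto
          finally show ?thesis .
        qed
      qed
    qed
    then have "((\<lambda>w. 1 - (1 - chi_cdf_e K (OUT w))) has_derivative (\<lambda>h. 0 - 0)) (at u)"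
      by (intro has_derivative_diff has_derivative_const)
    then show ?thesis using True by simp
  next
    case False
    then have fin_out: "OUT u < \<infinity>" by (simp add: less_top[symmetric])
    have ne: "Ji \<noteq> {}" using fin_out by (auto simp: OUT_def)
    have j2: "j2 \<in> Ji" "rr (a j2 u) (b j2 u) = OUT u"
      using theI'[OF A3[OF fin_out]] unfolding j2_def by auto
    have uniq: "j = j2" if "j \<in> Ji" "rr (a j u) (b j u) = OUT u" for j
      using A3[OF fin_out] j2 that by auto
    have bpos: "b j2 u > 0" using j2 fin_out by (auto simp: rr_def split: if_splits)
    have rv: "OUT u = ereal (- a j2 u / b j2 u)" using j2 bpos by (simp add: rr_def)
    have ev1: "eventually (\<lambda>w. OUT w = rr (a j2 w) (b j2 w)) (at u)"
    proof -
      have "eventually (\<lambda>w. Min ((\<lambda>j. rr (a j w) (b j w)) ` Ji) = rr (a j2 w) (b j2 w)) (at u)"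
      proof (rule ev_Min_eq[where f="\<lambda>j w. rr (a j w) (b j w)"])
        show "\<And>j. j \<in> Ji \<Longrightarrow> ((\<lambda>w. rr (a j w) (b j w)) \<longlongrightarrow> rr (a j u) (b j u)) (at u)" by (rule cont)
        fix j assume j: "j \<in> Ji" "j \<noteq> j2"
        have "OUT u \<le> rr (a j u) (b j u)" using j fin ne unfolding OUT_def by auto
        moreover have "rr (a j u) (b j u) \<noteq> OUT u" using uniq j by auto
        ultimately show "rr (a j2 u) (b j2 u) < rr (a j u) (b j u)" using j2 by auto
      qed (use fin j2 in auto)
      then show ?thesis using ne by (simp add: OUT_def)
    qed
    have ev2: "eventually (\<lambda>w. b j2 w > 0) (at u)"
      using order_tendstoD(1)[OF hasderiv_tendsto[OF bd[OF j2(1)]] bpos] .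
    have ev: "eventually (\<lambda>w. chi_cdf K (- a j2 w / b j2 w) = chi_cdf_e K (OUT w)) (at u)"
      using ev1 ev2 by eventually_elim (simp add: rr_def Fe_ereal)
    have "((\<lambda>w. chi_cdf K (- a j2 w / b j2 w)) has_derivative
     (\<lambda>h. ((- chi_pdf K (- a j2 u / b j2 u) / b j2 u) *\<^sub>R (a' j2 + (- a j2 u / b j2 u) *\<^sub>R b' j2)) \<bullet> h)) (at u)"
      using j2 bpos by (intro cdf_ratio_deriv ad bd si K)
    then have "((\<lambda>w. chi_cdf_e K (OUT w)) has_derivative
     (\<lambda>h. ((- chi_pdf K (- a j2 u / b j2 u) / b j2 u) *\<^sub>R (a' j2 + (- a j2 u / b j2 u) *\<^sub>R b' j2)) \<bullet> h)) (at u)"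
      by (rule has_derivative_transform_eventually[OF _ ev]) (simp_all add: rv Fe_ereal)
    then show ?thesis using False rv by (simp add: chi_pdf_e_def)
  qed
qed

lemma HIN:
  fixes a b :: "nat \<Rightarrow> 'a::real_inner \<Rightarrow> real" and a' b' :: "nat \<Rightarrow> 'a" and Jo :: "nat set" and u :: 'a and K :: nat
  defines "IN \<equiv> \<lambda>w. if Jo = {} then 0 else Max ((\<lambda>j. rr (- a j w) (- b j w)) ` Jo)"
  defines "j1 \<equiv> THE j. j \<in> Jo \<and> rr (- a j u) (- b j u) = IN u"
  assumes fin: "finite Jo" and K: "K \<ge> 1"
    and ad: "\<And>j. j \<in> Jo \<Longrightarrow> (a j has_derivative (\<lambda>h. a' j \<bullet> h)) (at u)"
    and bd: "\<And>j. j \<in> Jo \<Longrightarrow> (b j has_derivative (\<lambda>h. b' j \<bullet> h)) (at u)"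
    and so: "\<And>j. j \<in> Jo \<Longrightarrow> a j u > 0"
    and A3: "0 < IN u \<Longrightarrow> IN u < \<infinity> \<Longrightarrow> \<exists>!j. j \<in> Jo \<and> rr (- a j u) (- b j u) = IN u"
    and finin: "IN u < \<infinity>"
  shows "((\<lambda>w. chi_cdf_e K (IN w)) has_derivative (\<lambda>h. (if 0 < IN u then
     (- chi_pdf_e K (IN u) / b j1 u) *\<^sub>R (a' j1 + real_of_ereal (IN u) *\<^sub>R b' j1) else 0) \<bullet> h)) (at u)"
proof (cases "Jo = {}")
  case True
  have "((\<lambda>w. chi_cdf_e K 0) has_derivative (\<lambda>h. 0)) (at u)" by (rule has_derivative_const)
  then show ?thesis using True by (simp add: IN_def)
next
  case False
  have ad': "((\<lambda>w. - a j w) has_derivative (\<lambda>h. (- a' j) \<bullet> h)) (at u)" if "j \<in> Jo" for j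
    using has_derivative_minus[OF ad[OF that]] by simp
  have bd': "((\<lambda>w. - b j w) has_derivative (\<lambda>h. (- b' j) \<bullet> h)) (at u)" if "j \<in> Jo" for j
    using has_derivative_minus[OF bd[OF that]] by simp
  have cont: "((\<lambda>w. rr (- a j w) (- b j w)) \<longlongrightarrow> rr (- a j u) (- b j u)) (at u)" if "j \<in> Jo" for j
    using that by (intro rr_tendsto hasderiv_tendsto[OF ad'] hasderiv_tendsto[OF bd']) (auto simp: so)
  obtain j0 where j0: "j0 \<in> Jo" using False by auto
  have "0 < rr (- a j0 u) (- b j0 u)" using so[OF j0] by (intro rr_pos) simp
  also have "\<dots> \<le> IN u" using j0 fin False unfolding IN_def by auto
  finally have inpos: "0 < IN u" .
  have j1: "j1 \<in> Jo" "rr (- a j1 u) (- b j1 u) = IN u"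
    using theI'[OF A3[OF inpos finin]] unfolding j1_def by auto
  have uniq: "j = j1" if "j \<in> Jo" "rr (- a j u) (- b j u) = IN u" for j
    using A3[OF inpos finin] j1 that by auto
  have bneg: "- b j1 u > 0" using j1 finin by (auto simp: rr_def split: if_splits)
  have rv: "IN u = ereal (- (- a j1 u) / (- b j1 u))" using j1 bneg by (simp add: rr_def)
  have ev1: "eventually (\<lambda>w. IN w = rr (- a j1 w) (- b j1 w)) (at u)"
  proof -
    have "eventually (\<lambda>w. Max ((\<lambda>j. rr (- a j w) (- b j w)) ` Jo) = rr (- a j1 w) (- b j1 w)) (at u)"
    proof (rule ev_Max_eq[where f="\<lambda>j w. rr (- a j w) (- b j w)"])
      show "\<And>j. j \<in> Jo \<Longrightarrow> ((\<lambda>w. rr (- a j w) (- b j w)) \<longlongrightarrow> rr (- a j u) (- b j u)) (at u)" by (rule cont)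
      fix j assume j: "j \<in> Jo" "j \<noteq> j1"
      have "rr (- a j u) (- b j u) \<le> IN u" using j fin False unfolding IN_def by auto
      moreover have "rr (- a j u) (- b j u) \<noteq> IN u" using uniq j by auto
      ultimately show "rr (- a j u) (- b j u) < rr (- a j1 u) (- b j1 u)" using j1 by auto
    qed (use fin j1 in auto)
    then show ?thesis using False by (simp add: IN_def)
  qed
  have ev2: "eventually (\<lambda>w. - b j1 w > 0) (at u)"
    using order_tendstoD(1)[OF hasderiv_tendsto[OF bd'[OF j1(1)]] bneg] .
  have ev: "eventually (\<lambda>w. chi_cdf K (- (- a j1 w) / (- b j1 w)) = chi_cdf_e K (IN w)) (at u)"
    using ev1 ev2 by eventually_elim (simp add: rr_def Fe_ereal)
  have "((\<lambda>w. chi_cdf K (- (- a j1 w) / (- b j1 w))) has_derivative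
     (\<lambda>h. ((- chi_pdf K (- (- a j1 u) / (- b j1 u)) / (- b j1 u)) *\<^sub>R ((- a' j1) + (- (- a j1 u) / (- b j1 u)) *\<^sub>R (- b' j1))) \<bullet> h)) (at u)"
    using j1 bneg so[OF j1(1)] by (intro cdf_ratio_deriv[where a="\<lambda>w. - a j1 w" and b="\<lambda>w. - b j1 w"] ad' bd' K) auto
  then have "((\<lambda>w. chi_cdf_e K (IN w)) has_derivative
     (\<lambda>h. ((- chi_pdf K (- (- a j1 u) / (- b j1 u)) / (- b j1 u)) *\<^sub>R ((- a' j1) + (- (- a j1 u) / (- b j1 u)) *\<^sub>R (- b' j1))) \<bullet> h)) (at u)"
    by (rule has_derivative_transform_eventually[OF _ ev]) (simp_all add: rv Fe_ereal)
  then show ?thesis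
    apply (rule has_derivative_eq_rhs)
    using inpos rv by (intro ext) (simp add: chi_pdf_e_def inner_add_left inner_minus_left inner_diff_left algebra_simps)
qed

lemma sample_deriv:
  fixes a b :: "nat \<Rightarrow> 'a::real_inner \<Rightarrow> real" and a' b' :: "nat \<Rightarrow> 'a" and Ji Jo :: "nat set" and u :: 'a and K :: nat
  defines "IN \<equiv> \<lambda>w. if Jo = {} then 0 else Max ((\<lambda>j. rr (- a j w) (- b j w)) ` Jo)"
  defines "OUT \<equiv> \<lambda>w. if Ji = {} then \<infinity> else Min ((\<lambda>j. rr (a j w) (b j w)) ` Ji)"
  defines "j1 \<equiv> THE j. j \<in> Jo \<and> rr (- a j u) (- b j u) = IN u"
  defines "j2 \<equiv> THE j. j \<in> Ji \<and> rr (a j u) (b j u) = OUT u"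
  assumes fini: "finite Ji" and fino: "finite Jo" and K: "K \<ge> 1"
    and ad: "\<And>j. j \<in> Ji \<union> Jo \<Longrightarrow> (a j has_derivative (\<lambda>h. a' j \<bullet> h)) (at u)"
    and bd: "\<And>j. j \<in> Ji \<union> Jo \<Longrightarrow> (b j has_derivative (\<lambda>h. b' j \<bullet> h)) (at u)"
    and si: "\<And>j. j \<in> Ji \<Longrightarrow> a j u < 0"
    and so: "\<And>j. j \<in> Jo \<Longrightarrow> a j u > 0"
    and A2: "IN u \<noteq> \<infinity> \<or> OUT u \<noteq> \<infinity> \<Longrightarrow> IN u \<noteq> OUT u"
    and A3i: "0 < IN u \<Longrightarrow> IN u < \<infinity> \<Longrightarrow> \<exists>!j. j \<in> Jo \<and> rr (- a j u) (- b j u) = IN u"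
    and A3o: "OUT u < \<infinity> \<Longrightarrow> \<exists>!j. j \<in> Ji \<and> rr (a j u) (b j u) = OUT u"
  shows "((\<lambda>w. max 0 (chi_cdf_e K (OUT w) - chi_cdf_e K (IN w))) has_derivative (\<lambda>h.
     (if OUT u > IN u then
        (if OUT u = \<infinity> then 0 else
           (- chi_pdf_e K (OUT u) / b j2 u) *\<^sub>R (a' j2 + real_of_ereal (OUT u) *\<^sub>R b' j2))
      + (if 0 < IN u \<and> IN u < \<infinity> then
           (chi_pdf_e K (IN u) / b j1 u) *\<^sub>R (a' j1 + real_of_ereal (IN u) *\<^sub>R b' j1)
         else 0)
      else 0) \<bullet> h)) (at u)"
proof -
  have adi: "\<And>j. j \<in> Ji \<Longrightarrow> (a j has_derivative (\<lambda>h. a' j \<bullet> h)) (at u)"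
   and ado: "\<And>j. j \<in> Jo \<Longrightarrow> (a j has_derivative (\<lambda>h. a' j \<bullet> h)) (at u)"
   and bdi: "\<And>j. j \<in> Ji \<Longrightarrow> (b j has_derivative (\<lambda>h. b' j \<bullet> h)) (at u)"
   and bdo: "\<And>j. j \<in> Jo \<Longrightarrow> (b j has_derivative (\<lambda>h. b' j \<bullet> h)) (at u)"
    using ad bd by auto
  have ad': "((\<lambda>w. - a j w) has_derivative (\<lambda>h. (- a' j) \<bullet> h)) (at u)" if "j \<in> Jo" for j
    using has_derivative_minus[OF ado[OF that]] by simp
  have bd': "((\<lambda>w. - b j w) has_derivative (\<lambda>h. (- b' j) \<bullet> h)) (at u)" if "j \<in> Jo" for j
    using has_derivative_minus[OF bdo[OF that]] by simp
  have conto: "((\<lambda>w. rr (- a j w) (- b j w)) \<longlongrightarrow> rr (- a j u) (- b j u)) (at u)" if "j \<in> Jo" for j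
    using that by (intro rr_tendsto hasderiv_tendsto[OF ad'] hasderiv_tendsto[OF bd']) (auto simp: so)
  have conti: "((\<lambda>w. rr (a j w) (b j w)) \<longlongrightarrow> rr (a j u) (b j u)) (at u)" if "j \<in> Ji" for j
    using that by (intro rr_tendsto hasderiv_tendsto[OF adi] hasderiv_tendsto[OF bdi] si)
  define psi where "psi w = max 0 (chi_cdf_e K (OUT w) - chi_cdf_e K (IN w))" for w
  define GG where "GG = (if OUT u > IN u then
        (if OUT u = \<infinity> then 0 else
           (- chi_pdf_e K (OUT u) / b j2 u) *\<^sub>R (a' j2 + real_of_ereal (OUT u) *\<^sub>R b' j2))
      + (if 0 < IN u \<and> IN u < \<infinity> then
           (chi_pdf_e K (IN u) / b j1 u) *\<^sub>R (a' j1 + real_of_ereal (IN u) *\<^sub>R b' j1)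
         else 0)
      else 0)"
  have "(psi has_derivative (\<lambda>h. GG \<bullet> h)) (at u)"
  proof (cases "IN u = \<infinity>")
    case True
    then have ne: "Jo \<noteq> {}" by (auto simp: IN_def)
    obtain j0 where j0: "j0 \<in> Jo" "rr (- a j0 u) (- b j0 u) = \<infinity>"
    proof -
      have "Max ((\<lambda>j. rr (- a j u) (- b j u)) ` Jo) \<in> (\<lambda>j. rr (- a j u) (- b j u)) ` Jo"
        using fino ne by (intro Max_in) auto
      then obtain j where "j \<in> Jo" "Max ((\<lambda>j. rr (- a j u) (- b j u)) ` Jo) = rr (- a j u) (- b j u)" by auto
      then show ?thesis using that[of j] True ne unfolding IN_def by simp
    qed
    have GG: "GG = 0" using True by (simp add: GG_def)
    have "- b j0 u \<le> 0" using j0 by (auto simp: rr_def split: if_splits)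
    then have td: "((\<lambda>w. 1 - chi_cdf_e K (rr (- a j0 w) (- b j0 w))) has_derivative (\<lambda>h. 0)) (at u)"
      using so[OF j0(1)] by (intro tail_rr[OF hasderiv_tendsto[OF ad'[OF j0(1)]] _ _ bd'[OF j0(1)] K]) auto
    have "(psi has_derivative (\<lambda>h. 0)) (at u)"
    proof (rule deriv_zero_squeeze[OF td])
      show "1 - chi_cdf_e K (rr (- a j0 u) (- b j0 u)) = 0" using j0 by (simp add: chi_cdf_e_def)
      show "psi u = 0" using True Fe_bounds[OF K, of "OUT u"] by (simp add: psi_def chi_cdf_e_def)
      show "\<forall>\<^sub>F w in at u. \<bar>psi w\<bar> \<le> 1 - chi_cdf_e K (rr (- a j0 w) (- b j0 w))"
      proof (intro always_eventually allI)
        fix w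
        have "rr (- a j0 w) (- b j0 w) \<le> IN w" using j0 fino ne unfolding IN_def by auto
        then have "chi_cdf_e K (rr (- a j0 w) (- b j0 w)) \<le> chi_cdf_e K (IN w)" by (rule Fe_mono[OF K])
        then show "\<bar>psi w\<bar> \<le> 1 - chi_cdf_e K (rr (- a j0 w) (- b j0 w))"
          using Fe_bounds[OF K, of "OUT w"] Fe_bounds[OF K, of "rr (- a j0 w) (- b j0 w)"] unfolding psi_def
          by auto
      qed
    qed
    then show ?thesis using GG by simp
  next
    case False
    then have finin: "IN u < \<infinity>" by (simp add: less_top[symmetric])
    have HO: "((\<lambda>w. chi_cdf_e K (OUT w)) has_derivative (\<lambda>h. (if OUT u = \<infinity> then 0 else
     (- chi_pdf_e K (OUT u) / b j2 u) *\<^sub>R (a' j2 + real_of_ereal (OUT u) *\<^sub>R b' j2)) \<bullet> h)) (at u)"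
      unfolding OUT_def j2_def using A3o unfolding OUT_def by (intro HOUT fini K adi bdi si) auto
    have HI: "((\<lambda>w. chi_cdf_e K (IN w)) has_derivative (\<lambda>h. (if 0 < IN u then
     (- chi_pdf_e K (IN u) / b j1 u) *\<^sub>R (a' j1 + real_of_ereal (IN u) *\<^sub>R b' j1) else 0) \<bullet> h)) (at u)"
      unfolding IN_def j1_def using A3i finin unfolding IN_def by (intro HIN fino K ado bdo so) auto
    have evIN_lt: "eventually (\<lambda>w. IN w < ereal c) (at u)" if "IN u < ereal c" for c
    proof (cases "Jo = {}")
      case True then show ?thesis using that by (simp add: IN_def)
    next
      case ne: False
      have "eventually (\<lambda>w. \<forall>j\<in>Jo. rr (- a j w) (- b j w) < ereal c) (at u)"
      proof (rule ev_all_lt[where f="\<lambda>j w. rr (- a j w) (- b j w)"])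
        fix j assume j: "j \<in> Jo"
        have "rr (- a j u) (- b j u) \<le> IN u" using j fino ne unfolding IN_def by auto
        then show "rr (- a j u) (- b j u) < ereal c" using that by auto
      qed (use fino conto in auto)
      then show ?thesis by eventually_elim (use fino ne in \<open>simp add: IN_def\<close>)
    qed
    have evOUT_gt: "eventually (\<lambda>w. ereal c < OUT w) (at u)" if "ereal c < OUT u" for c
    proof (cases "Ji = {}")
      case True then show ?thesis using that by (simp add: OUT_def)
    next
      case ne: False
      have "eventually (\<lambda>w. \<forall>j\<in>Ji. ereal c < rr (a j w) (b j w)) (at u)"
      proof (rule ev_all_gt[where f="\<lambda>j w. rr (a j w) (b j w)"])
        fix j assume j: "j \<in> Ji"
        have "OUT u \<le> rr (a j u) (b j u)" using j fini ne unfolding OUT_def by auto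
        then show "ereal c < rr (a j u) (b j u)" using that by auto
      qed (use fini conti in auto)
      then show ?thesis by eventually_elim (use fini ne in \<open>simp add: OUT_def\<close>)
    qed
    show ?thesis
    proof (cases "OUT u > IN u")
      case True
      obtain c where c: "IN u < ereal c" "ereal c < OUT u" using ereal_dense2[OF True] by blast
      have ev: "eventually (\<lambda>w. chi_cdf_e K (OUT w) - chi_cdf_e K (IN w) = psi w) (at u)"
        using evIN_lt[OF c(1)] evOUT_gt[OF c(2)]
      proof eventually_elim
        case (elim w)
        then have "chi_cdf_e K (IN w) \<le> chi_cdf_e K (OUT w)" by (intro Fe_mono[OF K]) auto
        then show ?case by (simp add: psi_def)
      qed
      have "chi_cdf_e K (IN u) \<le> chi_cdf_e K (OUT u)" using True by (intro Fe_mono[OF K]) auto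
      then have at_u: "chi_cdf_e K (OUT u) - chi_cdf_e K (IN u) = psi u" by (simp add: psi_def)
      have "((\<lambda>w. chi_cdf_e K (OUT w) - chi_cdf_e K (IN w)) has_derivative (\<lambda>h. GG \<bullet> h)) (at u)"
        using has_derivative_diff[OF HO HI] apply (rule has_derivative_eq_rhs)
        using True finin by (intro ext) (auto simp: GG_def inner_add_left inner_diff_left)
      then show ?thesis by (rule has_derivative_transform_eventually[OF _ ev at_u]) simp
    next
      case False2: False
      then have lt: "OUT u < IN u" using A2 finin by (auto simp: not_less order.order_iff_strict)
      obtain c where c: "OUT u < ereal c" "ereal c < IN u" using ereal_dense2[OF lt] by blast
      have outpos: "0 < OUT u" unfolding OUT_def using fini by (auto intro!: rr_pos si)
      have neo: "Jo \<noteq> {}"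
      proof
        assume "Jo = {}"
        then have "ereal c < 0" using c(2) by (simp add: IN_def)
        then show False using c(1) outpos by (metis less_trans not_less_iff_gr_or_eq)
      qed
      have nei: "Ji \<noteq> {}" using c OUT_def by (auto split: if_splits)
      obtain ji where ji: "ji \<in> Ji" "rr (a ji u) (b ji u) = OUT u"
      proof -
        have "Min ((\<lambda>j. rr (a j u) (b j u)) ` Ji) \<in> (\<lambda>j. rr (a j u) (b j u)) ` Ji"
          using fini nei by (intro Min_in) auto
        then obtain j where "j \<in> Ji" "Min ((\<lambda>j. rr (a j u) (b j u)) ` Ji) = rr (a j u) (b j u)" by auto
        then show ?thesis using that[of j] nei unfolding OUT_def by simp
      qed
      obtain jo where jo: "jo \<in> Jo" "rr (- a jo u) (- b jo u) = IN u"
      proof -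
        have "Max ((\<lambda>j. rr (- a j u) (- b j u)) ` Jo) \<in> (\<lambda>j. rr (- a j u) (- b j u)) ` Jo"
          using fino neo by (intro Max_in) auto
        then obtain j where "j \<in> Jo" "Max ((\<lambda>j. rr (- a j u) (- b j u)) ` Jo) = rr (- a j u) (- b j u)" by auto
        then show ?thesis using that[of j] neo unfolding IN_def by simp
      qed
      have e1: "eventually (\<lambda>w. rr (a ji w) (b ji w) < ereal c) (at u)"
        using conti[OF ji(1)] ji(2) c(1) by (intro order_tendstoD) auto
      have e2: "eventually (\<lambda>w. ereal c < rr (- a jo w) (- b jo w)) (at u)"
        using conto[OF jo(1)] jo(2) c(2) by (intro order_tendstoD) auto
      have ev: "eventually (\<lambda>w. 0 = psi w) (at u)"
        using e1 e2
      proof eventually_elim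
        case (elim w)
        have "OUT w \<le> rr (a ji w) (b ji w)" using ji fini nei unfolding OUT_def by auto
        moreover have "rr (- a jo w) (- b jo w) \<le> IN w" using jo fino neo unfolding IN_def by auto
        ultimately have "OUT w \<le> IN w" using elim by auto
        then have "chi_cdf_e K (OUT w) \<le> chi_cdf_e K (IN w)" by (rule Fe_mono[OF K])
        then show ?case by (simp add: psi_def)
      qed
      have "chi_cdf_e K (OUT u) \<le> chi_cdf_e K (IN u)" using lt by (intro Fe_mono[OF K]) auto
      then have at_u: "0 = psi u" by (simp add: psi_def)
      have GG: "GG = 0" using False2 by (simp add: GG_def)
      have "((\<lambda>w. 0::real) has_derivative (\<lambda>h. 0)) (at u)" by (rule has_derivative_const)
      then have "(psi has_derivative (\<lambda>h. 0)) (at u)"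
        by (rule has_derivative_transform_eventually[OF _ ev at_u]) simp
      then show ?thesis using GG by simp
    qed
  qed
  then show ?thesis unfolding psi_def GG_def .
qed

lemma rho_out_eq:
  assumes line: "\<And>r. gj w (\<xi> + z + r *\<^sub>R LK \<phi> K v) = A + r * B" and A: "A < 0"
  shows "rho_out gj \<xi> \<phi> K w v z = rr A B"
proof -
  define S where "S = {ereal r | r. r \<ge> 0 \<and> gj w (\<xi> + z + r *\<^sub>R LK \<phi> K v) \<le> 0}"
  have S: "S = {ereal r | r. r \<ge> 0 \<and> A + r * B \<le> 0}" unfolding S_def line ..
  have ne: "S \<noteq> {}" unfolding S using A by (auto intro!: exI[of _ "ereal 0"])
  have "Sup S = rr A B"
  proof (cases "B > 0")
    case True
    have "Sup S = ereal (- A / B)"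
    proof (rule Sup_eqI)
      fix y assume "y \<in> S"
      then obtain r where r: "y = ereal r" "A + r * B \<le> 0" unfolding S by auto
      then have "r \<le> - A / B" using True by (simp add: field_simps)
      then show "y \<le> ereal (- A / B)" using r by simp
    next
      fix y assume "\<And>x. x \<in> S \<Longrightarrow> x \<le> y"
      moreover have "ereal (- A / B) \<in> S" unfolding S using True A by (auto simp: field_simps
          intro!: exI[of _ "- A / B"])
      ultimately show "ereal (- A / B) \<le> y" by blast
    qed
    then show ?thesis using True by (simp add: rr_def)
  next
    case False
    have "Sup S = \<infinity>"
    proof (rule ereal_top)
      fix R :: real
      have "max R 0 * B \<le> 0" using False by (intro mult_nonneg_nonpos) auto
      then have "ereal (max R 0) \<in> S" unfolding S using False A
        by (auto intro!: exI[of _ "max R 0"])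
      then have "ereal (max R 0) \<le> Sup S" by (rule Sup_upper)
      then show "ereal R \<le> Sup S" by (rule order_trans[rotated]) simp
    qed
    then show ?thesis using False by (simp add: rr_def)
  qed
  then show ?thesis using ne unfolding rho_out_def S_def[symmetric] Let_def by simp
qed

lemma rho_in_eq:
  assumes line: "\<And>r. gj w (\<xi> + z + r *\<^sub>R LK \<phi> K v) = A + r * B" and A: "A > 0"
  shows "rho_in gj \<xi> \<phi> K w v z = rr (- A) (- B)"
proof -
  define S where "S = {ereal r | r. r \<ge> 0 \<and> gj w (\<xi> + z + r *\<^sub>R LK \<phi> K v) \<le> 0}"
  have S: "S = {ereal r | r. r \<ge> 0 \<and> A + r * B \<le> 0}" unfolding S_def line ..
  have "Inf S = rr (- A) (- B)"
  proof (cases "B < 0")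
    case True
    have "Inf S = ereal (- A / B)"
    proof (rule Inf_eqI)
      fix y assume "y \<in> S"
      then obtain r where r: "y = ereal r" "A + r * B \<le> 0" unfolding S by auto
      then have "- A / B \<le> r" using True by (simp add: field_simps)
      then show "ereal (- A / B) \<le> y" using r by simp
    next
      fix y assume "\<And>x. x \<in> S \<Longrightarrow> y \<le> x"
      moreover have "ereal (- A / B) \<in> S" unfolding S using True A
        by (auto simp: field_simps intro!: exI[of _ "- A / B"] divide_nonneg_neg)
      ultimately show "y \<le> ereal (- A / B)" by blast
    qed
    then show ?thesis using True by (simp add: rr_def)
  next
    case False
    have "S = {}" unfolding S using False A
      by (auto simp: not_le intro: add_pos_nonneg mult_nonneg_nonneg)
    then show ?thesis using False by (simp add: rr_def top_ereal_def)
  qed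
  then show ?thesis unfolding rho_in_def S_def by simp
qed

lemma sample_deriv2:
  fixes a b :: "nat \<Rightarrow> 'a::real_inner \<Rightarrow> real" and a' b' :: "nat \<Rightarrow> 'a" and Ji Jo :: "nat set" and u :: 'a and K :: nat
    and gzL :: "nat \<Rightarrow> real \<Rightarrow> real" and guL :: "nat \<Rightarrow> real \<Rightarrow> 'a"
  defines "IN \<equiv> \<lambda>w. if Jo = {} then 0 else Max ((\<lambda>j. rr (- a j w) (- b j w)) ` Jo)"
  defines "OUT \<equiv> \<lambda>w. if Ji = {} then \<infinity> else Min ((\<lambda>j. rr (a j w) (b j w)) ` Ji)"
  defines "j1 \<equiv> THE j. j \<in> Jo \<and> rr (- a j u) (- b j u) = IN u"
  defines "j2 \<equiv> THE j. j \<in> Ji \<and> rr (a j u) (b j u) = OUT u"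
  assumes fini: "finite Ji" and fino: "finite Jo" and K: "K \<ge> 1"
    and ad: "\<And>j. j \<in> Ji \<union> Jo \<Longrightarrow> (a j has_derivative (\<lambda>h. a' j \<bullet> h)) (at u)"
    and bd: "\<And>j. j \<in> Ji \<union> Jo \<Longrightarrow> (b j has_derivative (\<lambda>h. b' j \<bullet> h)) (at u)"
    and si: "\<And>j. j \<in> Ji \<Longrightarrow> a j u < 0"
    and so: "\<And>j. j \<in> Jo \<Longrightarrow> a j u > 0"
    and A2: "IN u \<noteq> \<infinity> \<or> OUT u \<noteq> \<infinity> \<Longrightarrow> IN u \<noteq> OUT u"
    and A3i: "0 < IN u \<Longrightarrow> IN u < \<infinity> \<Longrightarrow> \<exists>!j. j \<in> Jo \<and> rr (- a j u) (- b j u) = IN u"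
    and A3o: "OUT u < \<infinity> \<Longrightarrow> \<exists>!j. j \<in> Ji \<and> rr (a j u) (b j u) = OUT u"
    and gzL: "\<And>j r. j \<in> Ji \<union> Jo \<Longrightarrow> gzL j r = b j u"
    and guL: "\<And>j r. j \<in> Ji \<union> Jo \<Longrightarrow> guL j r = a' j + r *\<^sub>R b' j"
  shows "((\<lambda>w. max 0 (chi_cdf_e K (OUT w) - chi_cdf_e K (IN w))) has_derivative (\<lambda>h.
     (if OUT u > IN u then
        (if OUT u = \<infinity> then 0 else
           (- chi_pdf_e K (OUT u) / gzL j2 (real_of_ereal (OUT u))) *\<^sub>R guL j2 (real_of_ereal (OUT u)))
      + (if 0 < IN u \<and> IN u < \<infinity> then
           (chi_pdf_e K (IN u) / gzL j1 (real_of_ereal (IN u))) *\<^sub>R guL j1 (real_of_ereal (IN u))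
         else 0)
      else 0) \<bullet> h)) (at u)"
proof -
  have j2: "j2 \<in> Ji" if "OUT u < \<infinity>"
    using theI'[OF A3o[OF that]] unfolding j2_def by auto
  have j1: "j1 \<in> Jo" if "0 < IN u" "IN u < \<infinity>"
    using theI'[OF A3i[OF that]] unfolding j1_def by auto
  have D: "((\<lambda>w. max 0 (chi_cdf_e K (OUT w) - chi_cdf_e K (IN w))) has_derivative (\<lambda>h.
     (if OUT u > IN u then
        (if OUT u = \<infinity> then 0 else
           (- chi_pdf_e K (OUT u) / b j2 u) *\<^sub>R (a' j2 + real_of_ereal (OUT u) *\<^sub>R b' j2))
      + (if 0 < IN u \<and> IN u < \<infinity> then
           (chi_pdf_e K (IN u) / b j1 u) *\<^sub>R (a' j1 + real_of_ereal (IN u) *\<^sub>R b' j1)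
         else 0)
      else 0) \<bullet> h)) (at u)"
    unfolding IN_def OUT_def j1_def j2_def
    apply (rule sample_deriv[of Ji Jo K a a' u b b', OF fini fino K ad bd si so])
    using A2 A3i A3o unfolding IN_def OUT_def by blast+
  show ?thesis
    apply (rule has_derivative_eq_rhs[OF D])
    apply (intro ext)
    using j1 j2 gzL guL by (auto simp: less_top)
qed

theorem proposition3p3:
  fixes \<phi> :: "nat \<Rightarrow> 'h::{real_inner,complete_space}"
    and K M N :: nat
    and U :: "'p::{real_inner,complete_space} set"
    and \<xi> :: 'h
    and g :: "nat \<Rightarrow> 'p \<Rightarrow> 'h \<Rightarrow> real"
    and gu :: "nat \<Rightarrow> 'p \<Rightarrow> 'h \<Rightarrow> 'p"
    and gz :: "nat \<Rightarrow> 'p \<Rightarrow> 'h \<Rightarrow> 'h"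
    and u :: 'p
    and v :: "nat \<Rightarrow> nat \<Rightarrow> real"
    and z :: "nat \<Rightarrow> 'h"
  assumes sep: "separable_space (euclidean :: 'h topology)"
    and orthonormal: "\<And>k l. k \<ge> 1 \<Longrightarrow> l \<ge> 1 \<Longrightarrow> \<phi> k \<bullet> \<phi> l = (if k = l then 1 else 0)"
    and K: "K \<ge> 1"
    and M: "M \<ge> 1"
    and N: "N \<ge> 1"
    and U: "open U"
    and C1_deriv: "\<And>j w y. j \<in> {1..M} \<Longrightarrow> w \<in> U \<Longrightarrow>
        ((\<lambda>(w', y'). g j w' y') has_derivative (\<lambda>(dw, dy). gu j w y \<bullet> dw + gz j w y \<bullet> dy)) (at (w, y))"
    and C1_cont_u: "\<And>j. j \<in> {1..M} \<Longrightarrow> continuous_on (U \<times> UNIV) (\<lambda>(w, y). gu j w y)"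
    and C1_cont_z: "\<And>j. j \<in> {1..M} \<Longrightarrow> continuous_on (U \<times> UNIV) (\<lambda>(w, y). gz j w y)"
    and affine: "\<And>j w y y' t. j \<in> {1..M} \<Longrightarrow> w \<in> U \<Longrightarrow>
        g j w (t *\<^sub>R y + (1 - t) *\<^sub>R y') = t * g j w y + (1 - t) * g j w y'"
    and u: "u \<in> U"
    and strict_feas: "\<And>j. j \<in> {1..M} \<Longrightarrow> g j u \<xi> < 0"
    and sphere: "\<And>i. i \<in> {1..N} \<Longrightarrow> on_sphere K (v i)"
    and A1: "\<And>i. i \<in> {1..N} \<Longrightarrow> J_in g M u \<xi> (z i) \<union> J_out g M u \<xi> (z i) = {1..M}"
    and A2: "\<And>i. i \<in> {1..N} \<Longrightarrow>
        (rho_in_t g M u \<xi> \<phi> K u (v i) (z i) \<noteq> \<infinity> \<or> rho_out_t g M u \<xi> \<phi> K u (v i) (z i) \<noteq> \<infinity>) \<Longrightarrow>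
        rho_in_t g M u \<xi> \<phi> K u (v i) (z i) \<noteq> rho_out_t g M u \<xi> \<phi> K u (v i) (z i)"
    and A3_in: "\<And>i. i \<in> {1..N} \<Longrightarrow>
        0 < rho_in_t g M u \<xi> \<phi> K u (v i) (z i) \<Longrightarrow> rho_in_t g M u \<xi> \<phi> K u (v i) (z i) < \<infinity> \<Longrightarrow>
        \<exists>!j. j \<in> J_out g M u \<xi> (z i) \<and>
              rho_in (g j) \<xi> \<phi> K u (v i) (z i) = rho_in_t g M u \<xi> \<phi> K u (v i) (z i)"
    and A3_out: "\<And>i. i \<in> {1..N} \<Longrightarrow> rho_out_t g M u \<xi> \<phi> K u (v i) (z i) < \<infinity> \<Longrightarrow>
        \<exists>!j. j \<in> J_in g M u \<xi> (z i) \<and>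
              rho_out (g j) \<xi> \<phi> K u (v i) (z i) = rho_out_t g M u \<xi> \<phi> K u (v i) (z i)"
  defines "\<phi>N \<equiv> (\<lambda>w. (1 / real N) * (\<Sum>i=1..N.
              max 0 (chi_cdf_e K (rho_out_t g M u \<xi> \<phi> K w (v i) (z i))
                     - chi_cdf_e K (rho_in_t g M u \<xi> \<phi> K w (v i) (z i)))))"
    and "G \<equiv> (1 / real N) *\<^sub>R (\<Sum>i=1..N.
          (let rin = rho_in_t g M u \<xi> \<phi> K u (v i) (z i);
               rout = rho_out_t g M u \<xi> \<phi> K u (v i) (z i);
               j1 = (THE j. j \<in> J_out g M u \<xi> (z i) \<and> rho_in (g j) \<xi> \<phi> K u (v i) (z i) = rin);
               j2 = (THE j. j \<in> J_in g M u \<xi> (z i) \<and> rho_out (g j) \<xi> \<phi> K u (v i) (z i) = rout);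
               Lv = LK \<phi> K (v i);
               yin = \<xi> + z i + real_of_ereal rin *\<^sub>R Lv;
               yout = \<xi> + z i + real_of_ereal rout *\<^sub>R Lv
           in (if rout > rin then
                 (if rout = \<infinity> then 0 else
                    (- chi_pdf_e K rout / (gz j2 u yout \<bullet> Lv)) *\<^sub>R gu j2 u yout)
               + (if 0 < rin \<and> rin < \<infinity> then
                    (chi_pdf_e K rin / (gz j1 u yin \<bullet> Lv)) *\<^sub>R gu j1 u yin
                  else 0)
               else 0)))"
  shows "\<phi>N differentiable (at u) \<and> (\<phi>N has_derivative (\<lambda>h. G \<bullet> h)) (at u)"
proof -
  have Kp: "K \<ge> 1" using K .
  have line: "g j w (p + r *\<^sub>R L) = g j w p + r * (g j w (p + L) - g j w p)"
    if "j \<in> {1..M}" "w \<in> U" for j w p L r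
  proof -
    have "r *\<^sub>R (p + L) + (1 - r) *\<^sub>R p = p + r *\<^sub>R L" by (simp add: algebra_simps)
    then show ?thesis using affine[OF that, of r "p + L" p] by (simp add: algebra_simps)
  qed
  have deriv_w: "((\<lambda>w. g j w y) has_derivative (\<lambda>h. gu j u y \<bullet> h)) (at u)" if "j \<in> {1..M}" for j y
  proof -
    have "((\<lambda>w. (\<lambda>(w', y'). g j w' y') (w, y)) has_derivative
        (\<lambda>h. (\<lambda>(dw, dy). gu j u y \<bullet> dw + gz j u y \<bullet> dy) (h, 0))) (at u)"
    proof -
      have P: "((\<lambda>w. (w, y)) has_derivative (\<lambda>h. (h, 0))) (at u)" by (auto intro!: derivative_eq_intros)
      show ?thesis using has_derivative_compose[OF P C1_deriv[OF that u, of y]] by simp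
    qed
    then show ?thesis by simp
  qed
  have deriv_r: "((\<lambda>r. g j u (p + r *\<^sub>R L)) has_derivative (\<lambda>t. gz j u (p + s *\<^sub>R L) \<bullet> (t *\<^sub>R L))) (at s)"
    if "j \<in> {1..M}" for j p L s
  proof -
    have "((\<lambda>r. (\<lambda>(w', y'). g j w' y') (u, p + r *\<^sub>R L)) has_derivative
        (\<lambda>t. (\<lambda>(dw, dy). gu j u (p + s *\<^sub>R L) \<bullet> dw + gz j u (p + s *\<^sub>R L) \<bullet> dy) (0, t *\<^sub>R L))) (at s)"
    proof -
      have P: "((\<lambda>r. (u, p + r *\<^sub>R L)) has_derivative (\<lambda>t. (0, t *\<^sub>R L))) (at s)"
        by (auto intro!: derivative_eq_intros)
      show ?thesis using has_derivative_compose[OF P C1_deriv[OF that u, of "p + s *\<^sub>R L"]] by simp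
    qed
    then show ?thesis by simp
  qed
  have inner_ext: "x = y" if "(\<lambda>h. x \<bullet> h) = (\<lambda>h. y \<bullet> h)" for x y :: 'p
  proof -
    have "x \<bullet> (x - y) = y \<bullet> (x - y)" using fun_cong[OF that, of "x - y"] .
    then have "(x - y) \<bullet> (x - y) = 0" by (simp add: inner_diff_left)
    then show ?thesis by simp
  qed
  have gu_id: "gu j u (p + r *\<^sub>R L) = gu j u p + r *\<^sub>R (gu j u (p + L) - gu j u p)"
    if j: "j \<in> {1..M}" for j p L r
  proof -
    have D2: "((\<lambda>w. g j w p + r * (g j w (p + L) - g j w p)) has_derivative
        (\<lambda>h. (gu j u p + r *\<^sub>R (gu j u (p + L) - gu j u p)) \<bullet> h)) (at u)"
    proof -
      have d1: "((\<lambda>w. g j w p) has_derivative (\<lambda>h. gu j u p \<bullet> h)) (at u)" by (rule deriv_w[OF j])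
      have d2: "((\<lambda>w. g j w (p + L)) has_derivative (\<lambda>h. gu j u (p + L) \<bullet> h)) (at u)" by (rule deriv_w[OF j])
      have "((\<lambda>w. g j w p + r * (g j w (p + L) - g j w p)) has_derivative
        (\<lambda>h. gu j u p \<bullet> h + r * (gu j u (p + L) \<bullet> h - gu j u p \<bullet> h))) (at u)"
        by (intro has_derivative_add has_derivative_mult_right has_derivative_diff d1 d2)
      then show ?thesis
        by (rule has_derivative_eq_rhs) (simp add: fun_eq_iff inner_add_left inner_diff_left algebra_simps)
    qed
    have "((\<lambda>w. g j w (p + r *\<^sub>R L)) has_derivative
        (\<lambda>h. (gu j u p + r *\<^sub>R (gu j u (p + L) - gu j u p)) \<bullet> h)) (at u)"
      by (rule has_derivative_transform_within_open[OF D2 U u]) (simp add: line[OF j])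
    from has_derivative_unique[OF deriv_w[OF j] this] show ?thesis by (rule inner_ext)
  qed
  have gz_id: "gz j u (p + s *\<^sub>R L) \<bullet> L = g j u (p + L) - g j u p"
    if j: "j \<in> {1..M}" for j p L s
  proof -
    have D2: "((\<lambda>r. g j u p + r * (g j u (p + L) - g j u p)) has_derivative
        (\<lambda>t. t * (g j u (p + L) - g j u p))) (at s)"
      by (auto intro!: derivative_eq_intros)
    have "((\<lambda>r. g j u (p + r *\<^sub>R L)) has_derivative (\<lambda>t. t * (g j u (p + L) - g j u p))) (at s)"
      using D2 by (simp add: line[OF j u])
    from fun_cong[OF has_derivative_unique[OF deriv_r[OF j] this], of 1]
    show ?thesis by simp
  qed
  define Gi where "Gi i = (let rin = rho_in_t g M u \<xi> \<phi> K u (v i) (z i);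
               rout = rho_out_t g M u \<xi> \<phi> K u (v i) (z i);
               j1 = (THE j. j \<in> J_out g M u \<xi> (z i) \<and> rho_in (g j) \<xi> \<phi> K u (v i) (z i) = rin);
               j2 = (THE j. j \<in> J_in g M u \<xi> (z i) \<and> rho_out (g j) \<xi> \<phi> K u (v i) (z i) = rout);
               Lv = LK \<phi> K (v i);
               yin = \<xi> + z i + real_of_ereal rin *\<^sub>R Lv;
               yout = \<xi> + z i + real_of_ereal rout *\<^sub>R Lv
           in (if rout > rin then
                 (if rout = \<infinity> then 0 else
                    (- chi_pdf_e K rout / (gz j2 u yout \<bullet> Lv)) *\<^sub>R gu j2 u yout)
               + (if 0 < rin \<and> rin < \<infinity> then
                    (chi_pdf_e K rin / (gz j1 u yin \<bullet> Lv)) *\<^sub>R gu j1 u yin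
                  else 0)
               else 0))" for i
  have Gsum: "G = (1 / real N) *\<^sub>R (\<Sum>i=1..N. Gi i)" unfolding G_def Gi_def ..
  have Di: "((\<lambda>w. max 0 (chi_cdf_e K (rho_out_t g M u \<xi> \<phi> K w (v i) (z i))
                     - chi_cdf_e K (rho_in_t g M u \<xi> \<phi> K w (v i) (z i)))) has_derivative (\<lambda>h. Gi i \<bullet> h)) (at u)"
    if i: "i \<in> {1..N}" for i
  proof -
    define Ji where "Ji = J_in g M u \<xi> (z i)"
    define Jo where "Jo = J_out g M u \<xi> (z i)"
    define Lv where "Lv = LK \<phi> K (v i)"
    define a where "a j w = g j w (\<xi> + z i)" for j w
    define b where "b j w = g j w (\<xi> + z i + Lv) - g j w (\<xi> + z i)" for j w
    define a' where "a' j = gu j u (\<xi> + z i)" for j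
    define b' where "b' j = gu j u (\<xi> + z i + Lv) - gu j u (\<xi> + z i)" for j
    define IN where "IN = (\<lambda>w. if Jo = {} then 0 else Max ((\<lambda>j. rr (- a j w) (- b j w)) ` Jo))"
    define OUT where "OUT = (\<lambda>w. if Ji = {} then \<infinity> else Min ((\<lambda>j. rr (a j w) (b j w)) ` Ji))"
    define j1 where "j1 = (THE j. j \<in> Jo \<and> rr (- a j u) (- b j u) = IN u)"
    define j2 where "j2 = (THE j. j \<in> Ji \<and> rr (a j u) (b j u) = OUT u)"
    have JM: "Ji \<subseteq> {1..M}" "Jo \<subseteq> {1..M}" by (auto simp: Ji_def Jo_def J_in_def J_out_def)
    have fini: "finite Ji" "finite Jo" using JM finite_subset by auto
    have si: "\<And>j. j \<in> Ji \<Longrightarrow> a j u < 0" by (simp add: Ji_def J_in_def a_def)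
    have so: "\<And>j. j \<in> Jo \<Longrightarrow> a j u > 0" by (simp add: Jo_def J_out_def a_def)
    have lineab: "g j w (\<xi> + z i + r *\<^sub>R LK \<phi> K (v i)) = a j w + r * b j w" if "j \<in> {1..M}" "w \<in> U" for j w r
      using line[OF that, of "\<xi> + z i" r Lv] by (simp add: a_def b_def Lv_def)
    have ad: "\<And>j. j \<in> Ji \<union> Jo \<Longrightarrow> (a j has_derivative (\<lambda>h. a' j \<bullet> h)) (at u)"
      unfolding a_def a'_def using JM by (intro deriv_w) auto
    have bd: "(b j has_derivative (\<lambda>h. b' j \<bullet> h)) (at u)" if "j \<in> Ji \<union> Jo" for j
    proof -
      have j: "j \<in> {1..M}" using that JM by auto
      show ?thesis unfolding b_def b'_def
        using has_derivative_diff[OF deriv_w[OF j, of "\<xi> + z i + Lv"] deriv_w[OF j, of "\<xi> + z i"]]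
        by (simp add: inner_diff_left)
    qed
    have rout_eq: "rho_out (g j) \<xi> \<phi> K w (v i) (z i) = rr (a j w) (b j w)" if "j \<in> {1..M}" "w \<in> U" "a j w < 0" for j w
      by (rule rho_out_eq[where gj="g j" and \<xi>=\<xi> and z="z i" and v="v i" and \<phi>=\<phi> and K=K, OF lineab[OF that(1,2)] that(3)])
    have rin_eq: "rho_in (g j) \<xi> \<phi> K w (v i) (z i) = rr (- a j w) (- b j w)" if "j \<in> {1..M}" "w \<in> U" "a j w > 0" for j w
      by (rule rho_in_eq[where gj="g j" and \<xi>=\<xi> and z="z i" and v="v i" and \<phi>=\<phi> and K=K, OF lineab[OF that(1,2)] that(3)])
    have T_eq: "rho_out_t g M u \<xi> \<phi> K w (v i) (z i) = OUT w \<and> rho_in_t g M u \<xi> \<phi> K w (v i) (z i) = IN w"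
      if w: "w \<in> U" "\<forall>j\<in>Ji. a j w < 0" "\<forall>j\<in>Jo. a j w > 0" for w
    proof -
      have 1: "(\<lambda>j. rho_out (g j) \<xi> \<phi> K w (v i) (z i)) ` Ji = (\<lambda>j. rr (a j w) (b j w)) ` Ji"
        using w JM by (intro image_cong refl rout_eq) auto
      have 2: "(\<lambda>j. rho_in (g j) \<xi> \<phi> K w (v i) (z i)) ` Jo = (\<lambda>j. rr (- a j w) (- b j w)) ` Jo"
        using w JM by (intro image_cong refl rin_eq) auto
      show ?thesis unfolding rho_out_t_def rho_in_t_def Ji_def[symmetric] Jo_def[symmetric] 1 2
        by (simp add: OUT_def IN_def)
    qed
    have uU: "u \<in> U" "\<forall>j\<in>Ji. a j u < 0" "\<forall>j\<in>Jo. a j u > 0" using u si so by auto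
    note Tu = T_eq[OF uU]
    have ev: "eventually (\<lambda>w. w \<in> U \<and> (\<forall>j\<in>Ji. a j w < 0) \<and> (\<forall>j\<in>Jo. a j w > 0)) (at u)"
    proof -
      have e1: "eventually (\<lambda>w. w \<in> U) (at u)" by (rule eventually_at_in_open'[OF U u])
      have e2: "eventually (\<lambda>w. \<forall>j\<in>Ji. a j w < 0) (at u)"
        using fini si by (intro ev_all_lt[where f=a]) (auto intro!: hasderiv_tendsto ad)
      have e3: "eventually (\<lambda>w. \<forall>j\<in>Jo. 0 < a j w) (at u)"
        using fini so by (intro ev_all_gt[where f=a]) (auto intro!: hasderiv_tendsto ad)
      show ?thesis using e1 e2 e3 by eventually_elim auto
    qed
    have P1: "(\<lambda>j. j \<in> Jo \<and> rho_in (g j) \<xi> \<phi> K u (v i) (z i) = x) = (\<lambda>j. j \<in> Jo \<and> rr (- a j u) (- b j u) = x)" for x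
      using JM so u by (auto simp: fun_eq_iff rin_eq)
    have P2: "(\<lambda>j. j \<in> Ji \<and> rho_out (g j) \<xi> \<phi> K u (v i) (z i) = x) = (\<lambda>j. j \<in> Ji \<and> rr (a j u) (b j u) = x)" for x
      using JM si u by (auto simp: fun_eq_iff rout_eq)
    have A2': "IN u \<noteq> \<infinity> \<or> OUT u \<noteq> \<infinity> \<Longrightarrow> IN u \<noteq> OUT u" using A2[OF i] Tu by simp
    have A3i': "0 < IN u \<Longrightarrow> IN u < \<infinity> \<Longrightarrow> \<exists>!j. j \<in> Jo \<and> rr (- a j u) (- b j u) = IN u"
    proof -
      assume "0 < IN u" "IN u < \<infinity>"
      then have "\<exists>!j. j \<in> Jo \<and> rho_in (g j) \<xi> \<phi> K u (v i) (z i) = IN u"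
        using A3_in[OF i] Tu unfolding Jo_def by simp
      then show ?thesis by (simp only: P1)
    qed
    have A3o': "OUT u < \<infinity> \<Longrightarrow> \<exists>!j. j \<in> Ji \<and> rr (a j u) (b j u) = OUT u"
    proof -
      assume "OUT u < \<infinity>"
      then have "\<exists>!j. j \<in> Ji \<and> rho_out (g j) \<xi> \<phi> K u (v i) (z i) = OUT u"
        using A3_out[OF i] Tu unfolding Ji_def by simp
      then show ?thesis by (simp only: P2)
    qed
    have gzL: "\<And>j r. j \<in> Ji \<union> Jo \<Longrightarrow> gz j u (\<xi> + z i + r *\<^sub>R Lv) \<bullet> Lv = b j u"
      using JM by (auto simp: gz_id b_def)
    have guL: "\<And>j r. j \<in> Ji \<union> Jo \<Longrightarrow> gu j u (\<xi> + z i + r *\<^sub>R Lv) = a' j + r *\<^sub>R b' j"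
      using JM by (auto simp: gu_id a'_def b'_def)
    have D: "((\<lambda>w. max 0 (chi_cdf_e K (OUT w) - chi_cdf_e K (IN w))) has_derivative (\<lambda>h. (if OUT u > IN u then
        (if OUT u = \<infinity> then 0 else
           (- chi_pdf_e K (OUT u) / (gz j2 u (\<xi> + z i + real_of_ereal (OUT u) *\<^sub>R Lv) \<bullet> Lv)) *\<^sub>R gu j2 u (\<xi> + z i + real_of_ereal (OUT u) *\<^sub>R Lv))
      + (if 0 < IN u \<and> IN u < \<infinity> then
           (chi_pdf_e K (IN u) / (gz j1 u (\<xi> + z i + real_of_ereal (IN u) *\<^sub>R Lv) \<bullet> Lv)) *\<^sub>R gu j1 u (\<xi> + z i + real_of_ereal (IN u) *\<^sub>R Lv)
         else 0)
      else 0) \<bullet> h)) (at u)"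
      unfolding IN_def OUT_def j1_def j2_def
      by (rule sample_deriv2[where gzL="\<lambda>j r. gz j u (\<xi> + z i + r *\<^sub>R Lv) \<bullet> Lv" and guL="\<lambda>j r. gu j u (\<xi> + z i + r *\<^sub>R Lv)",
          OF fini(1) fini(2) K ad bd si so A2'[unfolded IN_def OUT_def] A3i'[unfolded IN_def] A3o'[unfolded OUT_def] gzL guL])
    have GiX: "Gi i = (if OUT u > IN u then
        (if OUT u = \<infinity> then 0 else
           (- chi_pdf_e K (OUT u) / (gz j2 u (\<xi> + z i + real_of_ereal (OUT u) *\<^sub>R Lv) \<bullet> Lv)) *\<^sub>R gu j2 u (\<xi> + z i + real_of_ereal (OUT u) *\<^sub>R Lv))
      + (if 0 < IN u \<and> IN u < \<infinity> then
           (chi_pdf_e K (IN u) / (gz j1 u (\<xi> + z i + real_of_ereal (IN u) *\<^sub>R Lv) \<bullet> Lv)) *\<^sub>R gu j1 u (\<xi> + z i + real_of_ereal (IN u) *\<^sub>R Lv)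
         else 0)
      else 0)"
      unfolding Gi_def Let_def Lv_def[symmetric] Tu[THEN conjunct1] Tu[THEN conjunct2] Jo_def[symmetric] Ji_def[symmetric] P1 P2
        j1_def[symmetric] j2_def[symmetric] ..
    have ev2: "eventually (\<lambda>w. max 0 (chi_cdf_e K (OUT w) - chi_cdf_e K (IN w)) =
       max 0 (chi_cdf_e K (rho_out_t g M u \<xi> \<phi> K w (v i) (z i)) - chi_cdf_e K (rho_in_t g M u \<xi> \<phi> K w (v i) (z i)))) (at u)"
      using ev by eventually_elim (simp add: T_eq)
    show ?thesis unfolding GiX
      by (rule has_derivative_transform_eventually[OF D ev2]) (simp_all add: Tu)
  qed
  have DD: "((\<lambda>w. (1 / real N) * (\<Sum>i=1..N.
              max 0 (chi_cdf_e K (rho_out_t g M u \<xi> \<phi> K w (v i) (z i))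
                     - chi_cdf_e K (rho_in_t g M u \<xi> \<phi> K w (v i) (z i))))) has_derivative
      (\<lambda>h. (1 / real N) * (\<Sum>i=1..N. Gi i \<bullet> h))) (at u)"
    by (intro has_derivative_mult_right has_derivative_sum Di) simp
  have "(\<phi>N has_derivative (\<lambda>h. G \<bullet> h)) (at u)"
    unfolding \<phi>N_def
    by (rule has_derivative_eq_rhs[OF DD]) (simp add: Gsum fun_eq_iff inner_sum_left)
  then show ?thesis by (auto intro: differentiableI)
qed

end
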